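(* Let $C$ be a Plotkin-optimal projective linear code over $\mathbb{Z}_4$ of type $4^{k_1}2^{k_2}$ with exactly two nonzero Lee weights, and let $\Phi(C)\subseteq\mathbb{F}_2^{2n}$ be its Gray image. Then there is an integer $t$ with $1\le t\le k_1$ such that $\Phi(C)$ is a binary code of length $2^{2k_1+k_2}-2^{2k_1+k_2-t}$ with $2^{2k_1+k_2}$ codewords, whose nonzero Hamming weights are exactly $w_1=2^{2k_1+k_2-1}-2^{2k_1+k_2-t-1}$ and $w_2=2^{2k_1+k_2-1}$, occurring $2^{2k_1+k_2}-2^t$ and $2^t-1$ times respectively. In particular, these are the parameters and weight distribution of a binary two-weight linear code of type SU1 in the sense of Calderbank and Kantor, i.e. with $q=2$, dimension $l=2k_1+k_2$, length $\frac{q^l-q^m}{q-1}$, weights $q^{l-1}-q^{m-1}$ and $q^{l-1}$ with frequencies $q^l-q^{l-m}$ and $q^{l-m}-1$, where $m=2k_1+k_2-t$.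
   Context: A linear code of length $n$ over $\mathbb{Z}_4$ is a $\mathbb{Z}_4$-submodule of $\mathbb{Z}_4^n$, of type $4^{k_1}2^{k_2}$ if isomorphic to $\mathbb{Z}_4^{k_1}\times\mathbb{Z}_2^{k_2}$. Lee weight: $w_L(0)=0,w_L(1)=1,w_L(2)=2,w_L(3)=1$, additive on vectors; $d_L(C)$ is the minimum nonzero Lee weight. $C$ is Plotkin-optimal if $d_L(C)=\lfloor\frac{|C|}{|C|-1}n\rfloor$; $C$ is projective if $d_L(C^\perp)\ge3$ where the dual is with respect to $\sum x_iy_i\in\mathbb{Z}_4$. The Gray map $\phi:\mathbb{Z}_4\to\mathbb{F}_2^2$ is $\phi(0)=(0,0),\phi(1)=(0,1),\phi(2)=(1,1),\phi(3)=(1,0)$, and $\Phi:\mathbb{Z}_4^n\to\mathbb{F}_2^{2n}$ applies $\phi$ coordinatewise; it maps Lee weight to Hamming weight. *)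

theory Defs
  imports Complex_Main "HOL-Library.Numeral_Type"
begin


definition vadd :: "'a::plus list \<Rightarrow> 'a list \<Rightarrow> 'a list" where
  "vadd x y = map2 (+) x y"

definition smul :: "'a::times \<Rightarrow> 'a list \<Rightarrow> 'a list" where
  "smul a x = map ((*) a) x"

definition z4_linear_code :: "nat \<Rightarrow> 4 list set \<Rightarrow> bool" where
  "z4_linear_code n C \<longleftrightarrow> C \<subseteq> {x. length x = n} \<and> replicate n 0 \<in> C \<and>
     (\<forall>x\<in>C. \<forall>y\<in>C. vadd x y \<in> C) \<and> (\<forall>a. \<forall>x\<in>C. smul a x \<in> C)"

text \<open>C is of type 4^k1 2^k2: C is isomorphic (as a Z4-module, equivalently as an
  abelian group) to Z4^k1 x Z2^k2.\<close>
definition z4_code_type :: "4 list set \<Rightarrow> nat \<Rightarrow> nat \<Rightarrow> bool" where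
  "z4_code_type C k1 k2 \<longleftrightarrow>
     (\<exists>f :: 4 list \<Rightarrow> 4 list \<times> 2 list.
        bij_betw f C {(a, b). length a = k1 \<and> length b = k2} \<and>
        (\<forall>x\<in>C. \<forall>y\<in>C. f (vadd x y) = (vadd (fst (f x)) (fst (f y)), vadd (snd (f x)) (snd (f y)))))"

definition lee :: "4 \<Rightarrow> nat" where
  "lee a = (if a = 0 then 0 else if a = 2 then 2 else 1)"

definition lee_wt :: "4 list \<Rightarrow> nat" where
  "lee_wt x = sum_list (map lee x)"

definition lee_dist :: "4 list set \<Rightarrow> nat" where
  "lee_dist C = Min {lee_wt x | x. x \<in> C \<and> x \<noteq> replicate (length x) 0}"

definition plotkin_optimal :: "nat \<Rightarrow> 4 list set \<Rightarrow> bool" where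
  "plotkin_optimal n C \<longleftrightarrow>
     int (lee_dist C) = \<lfloor>real (card C) / (real (card C) - 1) * real n\<rfloor>"

definition z4_dual :: "nat \<Rightarrow> 4 list set \<Rightarrow> 4 list set" where
  "z4_dual n C = {y. length y = n \<and> (\<forall>x\<in>C. sum_list (map2 (*) x y) = 0)}"

text \<open>Projective: d_L(C^perp) \<ge> 3, i.e. every nonzero dual codeword has Lee weight \<ge> 3
  (vacuous if the dual is zero).\<close>
definition projective :: "nat \<Rightarrow> 4 list set \<Rightarrow> bool" where
  "projective n C \<longleftrightarrow> (\<forall>y\<in>z4_dual n C. y \<noteq> replicate n 0 \<longrightarrow> lee_wt y \<ge> 3)"

definition lee_weights :: "4 list set \<Rightarrow> nat set" where
  "lee_weights C = {lee_wt x | x. x \<in> C \<and> x \<noteq> replicate (length x) 0}"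

definition gray :: "4 \<Rightarrow> 2 list" where
  "gray a = (if a = 0 then [0, 0] else if a = 1 then [0, 1] else if a = 2 then [1, 1] else [1, 0])"

definition Gray :: "4 list \<Rightarrow> 2 list" where
  "Gray x = concat (map gray x)"

definition ham_wt :: "2 list \<Rightarrow> nat" where
  "ham_wt y = length (filter (\<lambda>c. c \<noteq> 0) y)"

end

theory Submission
  imports Defs "HOL-Computational_Algebra.Primes"
begin
lemma ex4: "(x::4) = 0 \<or> x = 1 \<or> x = 2 \<or> x = 3"
proof (cases x)
  case (of_int z)
  then have "z = 0 \<or> z = 1 \<or> z = 2 \<or> z = 3" by simp arith
  then show ?thesis using of_int by auto
qed
lemma ex2: "(x::2) = 0 \<or> x = 1"
proof (cases x)
  case (of_int z)
  then have "z = 0 \<or> z = 1" by simp arith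
  then show ?thesis using of_int by auto
qed
definition co :: "4 \<Rightarrow> int" where "co a = (if a = 0 then 1 else if a = 2 then -1 else 0)"
definition ee :: "4 \<Rightarrow> complex" where
  "ee a = (if a = 0 then 1 else if a = 1 then \<i> else if a = 2 then -1 else -\<i>)"
lemma co_prod: "2 * co a * co b = co (a+b) + co (a-b)"
  using ex4[of a] ex4[of b] by (auto simp: co_def)
lemma ee_add: "ee (a+b) = ee a * ee b"
  using ex4[of a] ex4[of b] by (auto simp: ee_def)
lemma ee_one: "ee a = 1 \<longleftrightarrow> a = 0"
  using ex4[of a] by (auto simp: ee_def complex_eq_iff)
lemma co_ee: "of_int (co a) = Re (ee a)"
  using ex4[of a] by (auto simp: ee_def co_def)
lemma lee_co: "int (lee a) = 1 - co a"
  using ex4[of a] by (auto simp: lee_def co_def)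

lemma length_vadd[simp]: "length (vadd x y) = min (length x) (length y)"
  by (simp add: vadd_def)
lemma nth_vadd[simp]: "i < length x \<Longrightarrow> i < length y \<Longrightarrow> vadd x y ! i = x ! i + y ! i"
  by (simp add: vadd_def)

lemma lin_fin: "z4_linear_code n C \<Longrightarrow> finite C"
proof -
  assume "z4_linear_code n C"
  then have "C \<subseteq> {xs. set xs \<subseteq> (UNIV::4 set) \<and> length xs = n}" by (auto simp: z4_linear_code_def)
  moreover have "finite {xs. set xs \<subseteq> (UNIV::4 set) \<and> length xs = n}"
    by (rule finite_lists_length_eq) simp
  ultimately show ?thesis by (rule finite_subset)
qed

lemma lin_len: "z4_linear_code n C \<Longrightarrow> x \<in> C \<Longrightarrow> length x = n"
  by (auto simp: z4_linear_code_def)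

lemma vadd_cancel: "length (x::4 list) = length c \<Longrightarrow> length y = length c \<Longrightarrow> vadd x c = vadd y c \<Longrightarrow> x = y"
proof (rule nth_equalityI)
  fix i assume a: "length x = length c" "length y = length c" "vadd x c = vadd y c" "i < length x"
  then have "vadd x c ! i = vadd y c ! i" by simp
  moreover have "vadd x c ! i = x!i + c!i" using a(1,2,4) by simp
  moreover have "vadd y c ! i = y!i + c!i" using a(1,2,4) by simp
  ultimately have "x ! i + c ! i = y ! i + c ! i" by simp
  then show "x ! i = y ! i" by simp
qed simp

lemma orth_ee:
  assumes L: "z4_linear_code n C" and h: "\<forall>x\<in>C. \<forall>y\<in>C. h (vadd x y) = h x + h y"
    and c0: "c0 \<in> C" "h c0 \<noteq> 0"
  shows "(\<Sum>c\<in>C. ee (h c)) = 0"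
proof -
  define T where "T = (\<lambda>c. vadd c c0)"
  have fin: "finite C" using L by (rule lin_fin)
  have inj: "inj_on T C"
    unfolding T_def inj_on_def using L c0 by (metis lin_len vadd_cancel)
  have sub: "T ` C \<subseteq> C" using L c0 unfolding T_def z4_linear_code_def by auto
  have eq: "T ` C = C"
    using card_subset_eq[OF fin sub] card_image[OF inj] by simp
  have "(\<Sum>c\<in>C. ee (h c)) = (\<Sum>c\<in>T ` C. ee (h c))" using eq by simp
  also have "\<dots> = (\<Sum>c\<in>C. ee (h (T c)))" by (rule sum.reindex[OF inj, unfolded comp_def])
  also have "\<dots> = (\<Sum>c\<in>C. ee (h c) * ee (h c0))"
    by (rule sum.cong) (use h c0 in \<open>auto simp: T_def ee_add\<close>)
  also have "\<dots> = (\<Sum>c\<in>C. ee (h c)) * ee (h c0)" by (simp add: sum_distrib_right)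
  finally have "(\<Sum>c\<in>C. ee (h c)) * (1 - ee (h c0)) = 0" by (simp add: algebra_simps)
  moreover have "1 - ee (h c0) \<noteq> 0" using ee_one[of "h c0"] c0 by auto
  ultimately show ?thesis by simp
qed

lemma orth:
  assumes L: "z4_linear_code n C" and h: "\<forall>x\<in>C. \<forall>y\<in>C. h (vadd x y) = h x + h y"
  shows "(\<Sum>c\<in>C. co (h c)) = (if \<forall>c\<in>C. h c = 0 then int (card C) else 0)"
proof (cases "\<forall>c\<in>C. h c = 0")
  case True
  then show ?thesis by (simp add: co_def)
next
  case False
  then obtain c0 where c0: "c0 \<in> C" "h c0 \<noteq> 0" by auto
  have "of_int (\<Sum>c\<in>C. co (h c)) = Re (\<Sum>c\<in>C. ee (h c))"
    by (simp add: co_ee)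
  also have "\<dots> = 0" using orth_ee[OF L h c0] by simp
  finally have "real_of_int (\<Sum>c\<in>C. co (h c)) = 0" .
  then have "(\<Sum>c\<in>C. co (h c)) = 0" by (simp only: of_int_eq_0_iff)
  then show ?thesis using False by auto
qed
lemma dot_sum: "length x = n \<Longrightarrow> length y = n \<Longrightarrow>
   sum_list (map2 (*) x y) = (\<Sum>k<n. x ! k * (y ! k :: 4))"
  by (simp add: sum_list_sum_nth atLeast0LessThan)

lemma lee_wt_sum: "lee_wt x = (\<Sum>k<length x. lee (x ! k))"
  by (simp add: lee_wt_def sum_list_sum_nth atLeast0LessThan)

definition yv :: "nat \<Rightarrow> nat \<Rightarrow> nat \<Rightarrow> 4 \<Rightarrow> 4 \<Rightarrow> 4 list" where
  "yv n i j a b = map (\<lambda>k. if k = i then a else if k = j then b else 0) [0..<n]"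

lemma sum_two:
  fixes F :: "nat \<Rightarrow> 4 \<Rightarrow> 'b::comm_monoid_add"
  assumes "i < n" "j < n" "i \<noteq> j" "\<And>k. F k 0 = 0"
  shows "(\<Sum>k<n. F k (if k = i then a else if k = j then b else 0)) = F i a + F j b"
proof -
  have "(\<Sum>k<n. F k (if k = i then a else if k = j then b else 0)) =
        (\<Sum>k<n. (if k = i then F k a else 0) + (if k = j then F k b else 0))"
    by (rule sum.cong) (use assms in auto)
  also have "\<dots> = F i a + F j b" using assms by (simp add: sum.distrib)
  finally show ?thesis .
qed

lemma sum_one:
  fixes F :: "nat \<Rightarrow> 4 \<Rightarrow> 'b::comm_monoid_add"
  assumes "i < n" "\<And>k. F k 0 = 0"
  shows "(\<Sum>k<n. F k (if k = i then a else if k = i then b else 0)) = F i a"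
proof -
  have "(\<Sum>k<n. F k (if k = i then a else if k = i then b else 0)) =
        (\<Sum>k<n. (if k = i then F k a else 0))"
    by (rule sum.cong) (use assms in auto)
  also have "\<dots> = F i a" using assms by simp
  finally show ?thesis .
qed

lemma proj_use:
  assumes L: "z4_linear_code n C" and P: "projective n C"
    and ij: "i < n" "j < n" and nz: "a \<noteq> 0"
    and w: "(if i = j then lee a else lee a + lee b) < 3"
    and all: "\<forall>c\<in>C. c ! i * a + (if i = j then 0 else c ! j * b) = 0"
  shows False
proof -
  let ?y = "yv n i j a b"
  have ly: "length ?y = n" by (simp add: yv_def)
  have yk: "\<And>k. k < n \<Longrightarrow> ?y ! k = (if k = i then a else if k = j then b else 0)"
    by (simp add: yv_def)
  have "?y \<in> z4_dual n C"
  proof -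
    { fix x assume x: "x \<in> C"
      have lx: "length x = n" by (rule lin_len[OF L x])
      have "sum_list (map2 (*) x ?y) = (\<Sum>k<n. x ! k * ?y ! k)" by (rule dot_sum[OF lx ly])
      also have "\<dots> = (\<Sum>k<n. x ! k * (if k = i then a else if k = j then b else 0))"
        by (rule sum.cong) (simp_all add: yk)
      also have "\<dots> = x ! i * a + (if i = j then 0 else x ! j * b)"
      proof (cases "i = j")
        case True
        then show ?thesis using sum_one[OF ij(1), of "\<lambda>k v. x ! k * v" a b] unfolding True[symmetric] by simp
      next
        case False
        then show ?thesis using sum_two[OF ij False, of "\<lambda>k v. x ! k * v" a b] by simp
      qed
      also have "\<dots> = 0" using all x by blast
      finally have "sum_list (map2 (*) x ?y) = 0" . }
    then show ?thesis using ly by (simp add: z4_dual_def)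
  qed
  moreover have "?y \<noteq> replicate n 0"
  proof
    assume "?y = replicate n 0"
    then have "?y ! i = 0" using ij by simp
    then show False using yk[OF ij(1)] nz by simp
  qed
  moreover have "lee_wt ?y < 3"
  proof -
    have "lee_wt ?y = (\<Sum>k<n. lee (if k = i then a else if k = j then b else 0))"
      unfolding lee_wt_sum ly by (rule sum.cong) (simp_all add: yk)
    also have "\<dots> = (if i = j then lee a else lee a + lee b)"
    proof (cases "i = j")
      case True
      then show ?thesis using sum_one[OF ij(1), of "\<lambda>k v. lee v" a b] unfolding True[symmetric] by (simp add: lee_def)
    next
      case False
      then show ?thesis using sum_two[OF ij False, of "\<lambda>k v. lee v" a b] by (simp add: lee_def)
    qed
    finally show ?thesis using w by simp
  qed
  ultimately show False using P unfolding projective_def by force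
qed

lemma P1: "z4_linear_code n C \<Longrightarrow> projective n C \<Longrightarrow> i < n \<Longrightarrow> \<exists>c\<in>C. c ! i + c ! i \<noteq> 0"
  using proj_use[of n C i i 2 0] by (force simp: lee_def mult_2_right)

lemma P2: "z4_linear_code n C \<Longrightarrow> projective n C \<Longrightarrow> i < n \<Longrightarrow> j < n \<Longrightarrow> i \<noteq> j \<Longrightarrow>
   \<exists>c\<in>C. c ! i + c ! j \<noteq> 0"
  using proj_use[of n C i j 1 1] by (force simp: lee_def)

lemma P3: "z4_linear_code n C \<Longrightarrow> projective n C \<Longrightarrow> i < n \<Longrightarrow> j < n \<Longrightarrow> i \<noteq> j \<Longrightarrow>
   \<exists>c\<in>C. c ! i - c ! j \<noteq> 0"
proof -
  assume a: "z4_linear_code n C" "projective n C" "i < n" "j < n" "i \<noteq> j"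
  have m: "\<And>x::4. x * 3 = - x"
  proof -
    fix x :: 4
    have "(3::4) = -1" by simp
    then have "x * 3 = x * (-1)" by (rule arg_cong)
    then show "x * 3 = - x" by simp
  qed
  show ?thesis using proj_use[of n C i j 1 3] a by (force simp: lee_def m)
qed

definition g :: "nat \<Rightarrow> 4 list \<Rightarrow> int" where
  "g n c = (\<Sum>i<n. co (c ! i))"

lemma col_add: "z4_linear_code n C \<Longrightarrow> i < n \<Longrightarrow> x \<in> C \<Longrightarrow> y \<in> C \<Longrightarrow>
   vadd x y ! i = x ! i + y ! i"
  by (simp add: lin_len)

lemma M1:
  assumes L: "z4_linear_code n C" and P: "projective n C"
  shows "(\<Sum>c\<in>C. g n c) = 0"
proof -
  have "(\<Sum>c\<in>C. g n c) = (\<Sum>i<n. \<Sum>c\<in>C. co (c ! i))"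
    unfolding g_def by (rule sum.swap)
  also have "\<dots> = (\<Sum>i<n. 0)"
  proof (rule sum.cong)
    fix i assume i: "i \<in> {..<n}"
    have h: "\<forall>x\<in>C. \<forall>y\<in>C. vadd x y ! i = x ! i + y ! i" using col_add[OF L] i by auto
    obtain c where c: "c \<in> C" "c ! i + c ! i \<noteq> 0" using P1[OF L P] i by auto
    have "\<not> (\<forall>c\<in>C. c ! i = 0)"
    proof
      assume "\<forall>c\<in>C. c ! i = 0"
      then have "c ! i = 0" using c by blast
      then show False using c by simp
    qed
    then show "(\<Sum>c\<in>C. co (c ! i)) = 0" using orth[OF L h] by auto
  qed simp
  finally show ?thesis by simp
qed

lemma M2:
  assumes L: "z4_linear_code n C" and P: "projective n C"
  shows "2 * (\<Sum>c\<in>C. (g n c)^2) = int n * int (card C)"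
proof -
  have sq: "\<And>c. 2 * (g n c)^2 = (\<Sum>i<n. \<Sum>j<n. 2 * co (c ! i) * co (c ! j))"
    unfolding g_def power2_eq_square sum_product by (simp add: sum_distrib_left mult.assoc)
  have "2 * (\<Sum>c\<in>C. (g n c)^2) = (\<Sum>c\<in>C. \<Sum>i<n. \<Sum>j<n. 2 * co (c ! i) * co (c ! j))"
    by (simp add: sum_distrib_left sq)
  also have "\<dots> = (\<Sum>c\<in>C. \<Sum>i<n. \<Sum>j<n. co (c ! i + c ! j) + co (c ! i - c ! j))"
    by (simp add: co_prod)
  also have "\<dots> = (\<Sum>i<n. \<Sum>j<n. \<Sum>c\<in>C. co (c ! i + c ! j) + co (c ! i - c ! j))"
    by (simp add: sum.swap[of _ C] sum.swap[of _ C "{..<n}"])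
  also have "\<dots> = (\<Sum>i<n. \<Sum>j<n. if i = j then int (card C) else 0)"
  proof (intro sum.cong refl)
    fix i j assume i: "i \<in> {..<n}" and j: "j \<in> {..<n}"
    have h1: "\<forall>x\<in>C. \<forall>y\<in>C. vadd x y ! i + vadd x y ! j = (x ! i + x ! j) + (y ! i + y ! j)"
      using col_add[OF L] i j by (auto simp: algebra_simps)
    have h2: "\<forall>x\<in>C. \<forall>y\<in>C. vadd x y ! i - vadd x y ! j = (x ! i - x ! j) + (y ! i - y ! j)"
      using col_add[OF L] i j by (auto simp: algebra_simps)
    have s1: "(\<Sum>c\<in>C. co (c ! i + c ! j)) = 0"
    proof -
      have "\<not> (\<forall>c\<in>C. c ! i + c ! j = 0)"
      proof (cases "i = j")
        case True then show ?thesis using P1[OF L P, of i] i by auto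
      next
        case False then show ?thesis using P2[OF L P, of i j] i j by auto
      qed
      then show ?thesis using orth[OF L h1] by auto
    qed
    have s2: "(\<Sum>c\<in>C. co (c ! i - c ! j)) = (if i = j then int (card C) else 0)"
    proof (cases "i = j")
      case True then show ?thesis by (simp add: co_def)
    next
      case False
      then have "\<not> (\<forall>c\<in>C. c ! i - c ! j = 0)" using P3[OF L P, of i j] i j by auto
      then show ?thesis using orth[OF L h2] False by auto
    qed
    show "(\<Sum>c\<in>C. co (c ! i + c ! j) + co (c ! i - c ! j)) = (if i = j then int (card C) else 0)"
      using s1 s2 by (simp add: sum.distrib)
  qed
  also have "\<dots> = int n * int (card C)" by simp
  finally show ?thesis .
qed

lemma M3:
  assumes L: "z4_linear_code n C" and P: "projective n C"
    and ph: "\<forall>x\<in>C. \<forall>y\<in>C. \<phi> (vadd x y) = \<phi> x + \<phi> y"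
    and ph2: "\<forall>c\<in>C. \<phi> c + \<phi> c = 0"
  shows "(\<Sum>c\<in>C. g n c * co (\<phi> c)) = 0"
proof -
  have "2 * (\<Sum>c\<in>C. g n c * co (\<phi> c)) = (\<Sum>c\<in>C. \<Sum>i<n. 2 * co (c ! i) * co (\<phi> c))"
    unfolding g_def sum_distrib_right sum_distrib_left by (simp add: mult.assoc)
  also have "\<dots> = (\<Sum>c\<in>C. \<Sum>i<n. co (c ! i + \<phi> c) + co (c ! i - \<phi> c))"
    by (simp add: co_prod)
  also have "\<dots> = (\<Sum>i<n. \<Sum>c\<in>C. co (c ! i + \<phi> c) + co (c ! i - \<phi> c))"
    by (rule sum.swap)
  also have "\<dots> = (\<Sum>i<n. 0)"
  proof (intro sum.cong refl)
    fix i assume i: "i \<in> {..<n}"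
    have h1: "\<forall>x\<in>C. \<forall>y\<in>C. vadd x y ! i + \<phi> (vadd x y) = (x ! i + \<phi> x) + (y ! i + \<phi> y)"
      using col_add[OF L] i ph by (auto simp: algebra_simps)
    have h2: "\<forall>x\<in>C. \<forall>y\<in>C. vadd x y ! i - \<phi> (vadd x y) = (x ! i - \<phi> x) + (y ! i - \<phi> y)"
      using col_add[OF L] i ph by (auto simp: algebra_simps)
    obtain c where c: "c \<in> C" "c ! i + c ! i \<noteq> 0" using P1[OF L P] i by auto
    have n1: "\<not> (\<forall>c\<in>C. c ! i + \<phi> c = 0)"
    proof
      assume "\<forall>c\<in>C. c ! i + \<phi> c = 0"
      then have "c ! i = - \<phi> c" using c by (simp add: eq_neg_iff_add_eq_0)
      then have "c ! i + c ! i = - (\<phi> c + \<phi> c)" by simp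
      then show False using c ph2 by simp
    qed
    have n2: "\<not> (\<forall>c\<in>C. c ! i - \<phi> c = 0)"
    proof
      assume "\<forall>c\<in>C. c ! i - \<phi> c = 0"
      then have "c ! i = \<phi> c" using c by simp
      then have "c ! i + c ! i = \<phi> c + \<phi> c" by simp
      then show False using c ph2 by simp
    qed
    show "(\<Sum>c\<in>C. co (c ! i + \<phi> c) + co (c ! i - \<phi> c)) = 0"
      using orth[OF L h1] orth[OF L h2] n1 n2 by (auto simp: sum.distrib)
  qed
  finally show ?thesis by simp
qed

lemma wt_g: "z4_linear_code n C \<Longrightarrow> c \<in> C \<Longrightarrow> int (lee_wt c) = int n - g n c"
  by (simp add: lee_wt_sum lin_len g_def of_nat_sum lee_co sum_subtractf)

lemma sum_delta_in: "finite C \<Longrightarrow> z \<in> C \<Longrightarrow> (\<Sum>c\<in>C. if c = z then F c else 0) = (F z :: int)"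
  by (simp add: sum.delta)

lemma sum_in_B: "finite C \<Longrightarrow> B \<subseteq> C \<Longrightarrow> (\<Sum>c\<in>C. if c \<in> B then F c else 0) = (\<Sum>c\<in>B. F c :: int)"
  by (metis (no_types) Int_absorb1 sum.inter_restrict)

lemma gsums:
  assumes fin: "finite C" and zC: "z \<in> C" and BC: "B \<subseteq> C" and zB: "z \<notin> B"
    and gdec: "\<forall>c\<in>C. G c = (if c = z then (x::int) else 0) - (if c \<in> B then m else 0)"
  shows "(\<Sum>c\<in>C. G c) = x - m * int (card B)"
    and "(\<Sum>c\<in>C. (G c)^2) = x^2 + m^2 * int (card B)"
    and "(\<Sum>c\<in>C. G c * F c) = x * F z - m * (\<Sum>c\<in>B. F c)"
proof -
  have "(\<Sum>c\<in>C. G c) = (\<Sum>c\<in>C. (if c = z then x else 0) - (if c \<in> B then m else 0))"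
    using gdec by (intro sum.cong) auto
  also have "\<dots> = x - m * int (card B)"
    using sum_delta_in[OF fin zC, of "\<lambda>_. x"] sum_in_B[OF fin BC, of "\<lambda>_. m"]
    by (simp add: sum_subtractf)
  finally show "(\<Sum>c\<in>C. G c) = x - m * int (card B)" .
  have "(\<Sum>c\<in>C. (G c)^2) = (\<Sum>c\<in>C. (if c = z then x^2 else 0) + (if c \<in> B then m^2 else 0))"
    using gdec zB by (intro sum.cong) auto
  also have "\<dots> = x^2 + m^2 * int (card B)"
    using sum_delta_in[OF fin zC, of "\<lambda>_. x^2"] sum_in_B[OF fin BC, of "\<lambda>_. m^2"]
    by (simp add: sum.distrib)
  finally show "(\<Sum>c\<in>C. (G c)^2) = x^2 + m^2 * int (card B)" .
  have "(\<Sum>c\<in>C. G c * F c) = (\<Sum>c\<in>C. (if c = z then x * F c else 0) - (if c \<in> B then m * F c else 0))"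
    using gdec by (intro sum.cong) (auto simp: left_diff_distrib)
  also have "\<dots> = x * F z - m * (\<Sum>c\<in>B. F c)"
    using sum_delta_in[OF fin zC, of "\<lambda>c. x * F c"] sum_in_B[OF fin BC, of "\<lambda>c. m * F c"]
    by (simp add: sum_subtractf sum_distrib_left)
  finally show "(\<Sum>c\<in>C. G c * F c) = x * F z - m * (\<Sum>c\<in>B. F c)" .
qed

lemma co_le1: "co a \<le> 1" by (simp add: co_def)
lemma co_eq1: "co a = 1 \<longleftrightarrow> a = 0" by (simp add: co_def)

lemma phi_vanish:
  fixes \<phi> :: "4 list \<Rightarrow> 4"
  assumes L: "z4_linear_code n C" and P: "projective n C"
    and ph: "\<forall>x\<in>C. \<forall>y\<in>C. \<phi> (vadd x y) = \<phi> x + \<phi> y"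
    and ph2: "\<forall>c\<in>C. \<phi> c + \<phi> c = 0"
    and zC: "z \<in> C" and zz: "vadd z z = z" and BC: "B \<subseteq> C" and zB: "z \<notin> B"
    and gdec: "\<forall>c\<in>C. g n c = (if c = z then int n else 0) - (if c \<in> B then m else 0)"
    and m: "m > 0" and mB: "m * int (card B) = int n"
  shows "\<forall>d\<in>B. \<phi> d = 0"
proof -
  have fin: "finite C" using L by (rule lin_fin)
  have finB: "finite B" using fin BC by (rule finite_subset[rotated])
  have "\<phi> (vadd z z) = \<phi> z + \<phi> z" using ph zC by blast
  then have "\<phi> z = \<phi> z + \<phi> z" by (simp only: zz)
  then have phz: "\<phi> z = 0" by simp
  have "0 = (\<Sum>c\<in>C. g n c * co (\<phi> c))" using M3[OF L P ph ph2] by simp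
  also have "\<dots> = int n * co (\<phi> z) - m * (\<Sum>c\<in>B. co (\<phi> c))"
    by (rule gsums(3)[OF fin zC BC zB gdec])
  finally have e: "0 = int n * co (\<phi> z) - m * (\<Sum>c\<in>B. co (\<phi> c))" .
  have co0: "co 0 = 1" by (simp add: co_def)
  have "m * (\<Sum>c\<in>B. co (\<phi> c)) = int n" using e phz co0 by simp
  then have "m * (\<Sum>c\<in>B. co (\<phi> c)) = m * int (card B)" using mB by simp
  then have "(\<Sum>c\<in>B. co (\<phi> c)) = (\<Sum>c\<in>B. 1)" using m by simp
  then have "(\<Sum>c\<in>B. 1 - co (\<phi> c)) = 0" by (simp add: sum_subtractf)
  moreover have "\<forall>c\<in>B. 0 \<le> 1 - co (\<phi> c)" using co_le1 by simp
  ultimately have z: "\<forall>c\<in>B. 1 - co (\<phi> c) = 0" by (simp only: sum_nonneg_eq_0_iff[OF finB])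
  show ?thesis
  proof
    fix d assume "d \<in> B"
    then have "co (\<phi> d) = 1" using z by simp
    then show "\<phi> d = 0" using co_eq1 by blast
  qed
qed

lemma Gray_Nil[simp]: "Gray [] = []" by (simp add: Gray_def)
lemma Gray_Cons[simp]: "Gray (a # x) = gray a @ Gray x" by (simp add: Gray_def)
lemma len_gray[simp]: "length (gray a) = 2" by (simp add: gray_def)
lemma len_Gray: "length (Gray x) = 2 * length x" by (induct x) simp_all
lemma ham_app: "ham_wt (xs @ ys) = ham_wt xs + ham_wt ys" by (simp add: ham_wt_def)
lemma ham_gray: "ham_wt (gray a) = lee a"
  using ex4[of a] by (auto simp: gray_def ham_wt_def lee_def)
lemma ham_Gray: "ham_wt (Gray x) = lee_wt x"
proof (induct x)
  case Nil then show ?case by (simp add: ham_wt_def lee_wt_def)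
next
  case (Cons a x) then show ?case by (simp add: ham_app ham_gray lee_wt_def)
qed
lemma gray_inj: "gray a = gray b \<Longrightarrow> a = b"
  using ex4[of a] ex4[of b] by (auto simp: gray_def)
lemma Gray_inj: "Gray x = Gray y \<Longrightarrow> x = y"
proof (induct x arbitrary: y)
  case Nil then show ?case
    by (cases y) (auto dest: arg_cong[of _ _ length])
next
  case (Cons a x)
  show ?case
  proof (cases y)
    case Nil then show ?thesis using Cons.prems by (auto dest: arg_cong[of _ _ length])
  next
    case (Cons b y')
    then have "gray a @ Gray x = gray b @ Gray y'" using Cons.prems by simp
    then have "gray a = gray b \<and> Gray x = Gray y'" by (simp add: append_eq_append_conv)
    then show ?thesis using Cons Cons.hyps gray_inj by blast
  qed
qed
lemma Gray_zero: "Gray (replicate n 0) = replicate (2 * n) 0"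
  by (induct n) (simp_all add: gray_def)

lemma card_E0: "card {(a :: 4 list, b :: 2 list). length a = k1 \<and> length b = k2} = 4 ^ k1 * 2 ^ k2"
proof -
  have "{(a :: 4 list, b :: 2 list). length a = k1 \<and> length b = k2} =
        {a. set a \<subseteq> UNIV \<and> length a = k1} \<times> {b. set b \<subseteq> UNIV \<and> length b = k2}" by auto
  moreover have "card {a::4 list. length a = k1} = 4 ^ k1"
    using card_lists_length_eq[of "UNIV::4 set" k1] by simp
  moreover have "card {a::2 list. length a = k2} = 2 ^ k2"
    using card_lists_length_eq[of "UNIV::2 set" k2] by simp
  ultimately show ?thesis by (simp add: card_cartesian_product)
qed

lemma card_S2: "card ({a :: 4 list. set a \<subseteq> {0, 2} \<and> length a = k1} \<times> {replicate k2 (0::2)}) = 2 ^ k1"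
  by (simp add: card_cartesian_product card_lists_length_eq numeral_2_eq_2)

lemma fin_S2: "finite ({a :: 4 list. set a \<subseteq> {0, 2} \<and> length a = k1} \<times> {replicate k2 (0::2)})"
  by (simp add: finite_lists_length_eq)

definition emb :: "2 \<Rightarrow> 4" where "emb e = (if e = 0 then 0 else 2)"
lemma emb_add: "emb (a + b) = emb a + emb b" using ex2[of a] ex2[of b] by (auto simp: emb_def)
lemma emb_2: "emb a + emb a = 0" using ex2[of a] by (auto simp: emb_def)
lemma emb_0: "emb a = 0 \<longleftrightarrow> a = 0" using ex2[of a] by (auto simp: emb_def)
lemma two4: "(2::4) * a + 2 * a = 0" using ex4[of a] by auto
lemma two4z: "(2::4) * a = 0 \<Longrightarrow> a = 0 \<or> a = 2" using ex4[of a] by auto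

lemma add_zero_hom:
  fixes \<phi> :: "4 list \<Rightarrow> 4"
  assumes ph: "\<forall>x\<in>C. \<forall>y\<in>C. \<phi> (vadd x y) = \<phi> x + \<phi> y" and zC: "z \<in> C" and zz: "vadd z z = z"
  shows "\<phi> z = 0"
proof -
  have "\<phi> (vadd z z) = \<phi> z + \<phi> z" using ph zC by blast
  then have "\<phi> z = \<phi> z + \<phi> z" by (simp only: zz)
  then show "\<phi> z = 0" by simp
qed

theorem mainTheorem3:
  fixes n k1 k2 :: nat and C :: "4 list set"
  assumes "z4_linear_code n C"
    and "z4_code_type C k1 k2"
    and "plotkin_optimal n C"
    and "projective n C"
    and "card (lee_weights C) = 2"
  shows "\<exists>t::nat. 1 \<le> t \<and> t \<le> k1 \<and>
     (\<forall>y\<in>Gray ` C. length y = 2 * n) \<and>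
     2 * n = 2 ^ (2 * k1 + k2) - 2 ^ (2 * k1 + k2 - t) \<and>
     card (Gray ` C) = 2 ^ (2 * k1 + k2) \<and>
     {ham_wt y | y. y \<in> Gray ` C \<and> y \<noteq> replicate (2 * n) 0} =
       {2 ^ (2 * k1 + k2 - 1) - 2 ^ (2 * k1 + k2 - t - 1), 2 ^ (2 * k1 + k2 - 1)} \<and>
     card {y \<in> Gray ` C. ham_wt y = 2 ^ (2 * k1 + k2 - 1) - 2 ^ (2 * k1 + k2 - t - 1)}
       = 2 ^ (2 * k1 + k2) - 2 ^ t \<and>
     card {y \<in> Gray ` C. ham_wt y = 2 ^ (2 * k1 + k2 - 1)} = 2 ^ t - 1"
proof -
  note L = assms(1) and Ty = assms(2) and Pl = assms(3) and P = assms(4) and W2 = assms(5)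
  define z where "z = replicate n (0::4)"
  define l where "l = 2 * k1 + k2"
  have fin: "finite C" using L by (rule lin_fin)
  have zC: "z \<in> C" using L by (simp add: z4_linear_code_def z_def)
  have lenC: "\<And>x. x \<in> C \<Longrightarrow> length x = n" using L by (rule lin_len)
  have zz: "vadd z z = z" by (rule nth_equalityI) (simp_all add: z_def)
  have lz: "lee_wt z = 0" by (simp add: z_def lee_wt_def lee_def)
  have Wdef: "lee_weights C = {lee_wt x | x. x \<in> C \<and> x \<noteq> z}"
    using lenC by (auto simp: lee_weights_def z_def)
  obtain w1 w2 where w12: "w1 < w2" "lee_weights C = {w1, w2}"
  proof -
    from W2 obtain a b where ab: "lee_weights C = {a, b}" "a \<noteq> b" unfolding card_2_iff by blast
    show ?thesis
    proof (cases "a < b")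
      case True then show ?thesis using that[of a b] ab by simp
    next
      case False then have "b < a" using ab by simp
      then show ?thesis using that[of b a] ab by (simp add: insert_commute)
    qed
  qed
  obtain x1 where x1: "x1 \<in> C" "x1 \<noteq> z" "lee_wt x1 = w1"
  proof -
    have "w1 \<in> lee_weights C" using w12 by simp
    then show ?thesis using that Wdef by auto
  qed
  obtain x2 where x2: "x2 \<in> C" "x2 \<noteq> z" "lee_wt x2 = w2"
  proof -
    have "w2 \<in> lee_weights C" using w12 by simp
    then show ?thesis using that Wdef by auto
  qed
  have npos: "n > 0"
  proof (rule ccontr)
    assume "\<not> n > 0"
    then have "n = 0" by simp
    then have "x1 = z" using lenC[OF x1(1)] by (simp add: z_def)
    then show False using x1 by simp
  qed
  have x12: "x1 \<noteq> x2" using x1 x2 w12 by auto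
  have N3: "card C \<ge> 3"
  proof -
    have "{z, x1, x2} \<subseteq> C" using zC x1 x2 by auto
    then have "card {z, x1, x2} \<le> card C" using fin by (rule card_mono[rotated])
    moreover have "card {z, x1, x2} = 3" using x1 x2 x12 by auto
    ultimately show ?thesis by simp
  qed
  have gz: "g n z = int n" by (simp add: g_def z_def co_def)
  have M2': "2 * (\<Sum>c\<in>C. (g n c)^2) = int n * int (card C)" by (rule M2[OF L P])
  have "(g n z)^2 \<le> (\<Sum>c\<in>C. (g n c)^2)"
    by (rule member_le_sum[OF zC]) (simp_all add: fin)
  then have "int n * (2 * int n) \<le> int n * int (card C)" using M2' gz by (simp add: power2_eq_square)
  then have "2 * int n \<le> int (card C)" using npos by simp
  then have n2N: "2 * n \<le> card C" by simp
  have n1N: "n + 1 < card C" using n2N N3 npos by linarith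
  have dist: "lee_dist C = w1"
  proof -
    have "lee_dist C = Min (lee_weights C)" by (simp add: lee_dist_def lee_weights_def)
    then show ?thesis using w12 by simp
  qed
  have fl: "\<lfloor>real (card C) / (real (card C) - 1) * real n\<rfloor> = int n"
  proof -
    have r: "real n + 1 < real (card C)" using n1N by linarith
    have pos: "real (card C) - 1 > 0" using r by linarith
    have a: "real n \<le> real (card C) / (real (card C) - 1) * real n"
      using pos by (simp add: field_simps)
    have b: "real (card C) / (real (card C) - 1) * real n < real n + 1"
      using pos r by (simp add: field_simps)
    show ?thesis using a b by (simp add: floor_eq_iff)
  qed
  have w1n: "w1 = n" using Pl dist fl by (simp add: plotkin_optimal_def)
  have w2n: "w2 > n" using w12 w1n by simp
  have wts: "\<And>c. c \<in> C \<Longrightarrow> c \<noteq> z \<Longrightarrow> lee_wt c = n \<or> lee_wt c = w2"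
  proof -
    fix c assume "c \<in> C" "c \<noteq> z"
    then have "lee_wt c \<in> lee_weights C" using Wdef by auto
    then show "lee_wt c = n \<or> lee_wt c = w2" using w12 w1n by simp
  qed
  define m where "m = int w2 - int n"
  define B where "B = {c\<in>C. lee_wt c = w2}"
  have BC: "B \<subseteq> C" by (auto simp: B_def)
  have finB: "finite B" using fin BC by (rule finite_subset[rotated])
  have zB: "z \<notin> B" using lz w2n by (auto simp: B_def)
  have x2B: "x2 \<in> B" using x2 by (simp add: B_def)
  have mpos: "m > 0" using w2n by (simp add: m_def)
  have gdec: "\<forall>c\<in>C. g n c = (if c = z then int n else 0) - (if c \<in> B then m else 0)"
  proof
    fix c assume c: "c \<in> C"
    have e: "int (lee_wt c) = int n - g n c" by (rule wt_g[OF L c])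
    show "g n c = (if c = z then int n else 0) - (if c \<in> B then m else 0)"
    proof (cases "c = z")
      case True then show ?thesis using gz zB by simp
    next
      case False
      then have "lee_wt c = n \<or> lee_wt c = w2" using wts c by blast
      then show ?thesis using False e c w2n by (auto simp: B_def m_def)
    qed
  qed
  have mB: "m * int (card B) = int n"
    using M1[OF L P] gsums(1)[OF fin zC BC zB gdec] by simp
  have eq1: "2 * (int n ^ 2 + m ^ 2 * int (card B)) = int n * int (card C)"
    using M2' gsums(2)[OF fin zC BC zB gdec] by simp
  have sq: "m ^ 2 * int (card B) = m * int n" by (metis mB power2_eq_square mult.assoc)
  have eq2: "2 * (int n ^ 2 + m * int n) = int n * int (card C)" using eq1 unfolding sq .
  have "int n * (2 * int n + 2 * m) = 2 * (int n ^ 2 + m * int n)"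
    by (simp add: power2_eq_square algebra_simps)
  then have "int n * (2 * int n + 2 * m) = int n * int (card C)" using eq2 by simp
  then have NM: "2 * int n + 2 * m = int (card C)" using npos by simp
  obtain f :: "4 list \<Rightarrow> 4 list \<times> 2 list" where
    bij: "bij_betw f C {(a, b). length a = k1 \<and> length b = k2}" and
    fadd: "\<forall>x\<in>C. \<forall>y\<in>C. f (vadd x y) = (vadd (fst (f x)) (fst (f y)), vadd (snd (f x)) (snd (f y)))"
    using Ty by (auto simp: z4_code_type_def)
  have cardC: "card C = 2 ^ l"
  proof -
    have "card C = 4 ^ k1 * 2 ^ k2" using bij_betw_same_card[OF bij] card_E0 by simp
    also have "\<dots> = 2 ^ l" by (simp add: l_def power_add power_mult)
    finally show ?thesis .
  qed
  have l1: "l \<ge> 1"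
  proof (rule ccontr)
    assume "\<not> l \<ge> 1" then have "l = 0" by simp
    then show False using cardC N3 by simp
  qed
  have pl: "(2::nat) ^ l = 2 * 2 ^ (l - 1)" using l1 by (metis Suc_diff_1 less_le_trans power_Suc zero_less_one)
  define mm where "mm = nat m"
  have mm: "int mm = m" using mpos by (simp add: mm_def)
  have "int ((card B + 1) * mm) = int (2 ^ (l - 1))"
  proof -
    have "int ((card B + 1) * mm) = m * int (card B) + m" using mm by (simp add: algebra_simps)
    also have "\<dots> = int n + m" using mB by simp
    also have "\<dots> = int (2 ^ (l - 1))" using NM cardC pl by simp
    finally show ?thesis .
  qed
  then have Bm: "(card B + 1) * mm = 2 ^ (l - 1)" by (simp only: of_nat_eq_iff)
  then have "card B + 1 dvd 2 ^ (l - 1)" by (metis dvd_triv_left)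
  then obtain t where t: "t \<le> l - 1" "card B + 1 = 2 ^ t"
    using divides_primepow_nat[OF two_is_prime_nat] by blast
  have Bpos: "card B > 0" using finB x2B card_gt_0_iff by blast
  have t1: "t \<ge> 1"
  proof (rule ccontr)
    assume "\<not> t \<ge> 1" then have "t = 0" by simp
    then show False using t Bpos by simp
  qed
  have pt: "(2::nat) ^ (l - 1) = 2 ^ t * 2 ^ (l - 1 - t)" using t(1) by (simp flip: power_add)
  have "2 ^ t * mm = 2 ^ t * 2 ^ (l - 1 - t)" by (metis Bm t(2) pt)
  then have mmv: "mm = 2 ^ (l - 1 - t)" by simp
  have "int (card C) = 2 * int (2 ^ (l - 1))" using cardC pl by simp
  then have "int n + m = int (2 ^ (l - 1))" using NM by linarith
  then have "int (n + mm) = int (2 ^ (l - 1))" using mm by simp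
  then have nv: "n + mm = 2 ^ (l - 1)" by (simp only: of_nat_eq_iff)
  have w2v: "w2 = 2 ^ (l - 1)" using nv mm m_def by simp
  have nv2: "n = 2 ^ (l - 1) - 2 ^ (l - 1 - t)" using nv mmv by simp
  define D where "D = insert z B"
  have DC: "D \<subseteq> C" using zC BC by (simp add: D_def)
  have cardD: "card D = 2 ^ t" using t(2) finB zB by (simp add: D_def)
  have fE: "\<And>c. c \<in> C \<Longrightarrow> length (fst (f c)) = k1 \<and> length (snd (f c)) = k2"
  proof -
    fix c assume c: "c \<in> C"
    have "f c \<in> {(a, b). length a = k1 \<and> length b = k2}" using bij_betwE[OF bij] c by (rule bspec)
    then show "length (fst (f c)) = k1 \<and> length (snd (f c)) = k2" by (cases "f c") auto
  qed
  have vanish: "\<And>\<phi> :: 4 list \<Rightarrow> 4. \<forall>x\<in>C. \<forall>y\<in>C. \<phi> (vadd x y) = \<phi> x + \<phi> y \<Longrightarrow>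
      \<forall>c\<in>C. \<phi> c + \<phi> c = 0 \<Longrightarrow> \<forall>d\<in>D. \<phi> d = 0"
  proof -
    fix \<phi> :: "4 list \<Rightarrow> 4"
    assume ph: "\<forall>x\<in>C. \<forall>y\<in>C. \<phi> (vadd x y) = \<phi> x + \<phi> y" and ph2: "\<forall>c\<in>C. \<phi> c + \<phi> c = 0"
    have "\<forall>d\<in>B. \<phi> d = 0" by (rule phi_vanish[OF L P ph ph2 zC zz BC zB gdec mpos mB])
    moreover have "\<phi> z = 0" by (rule add_zero_hom[OF ph zC zz])
    ultimately show "\<forall>d\<in>D. \<phi> d = 0" by (simp add: D_def)
  qed
  have fD: "f ` D \<subseteq> {a :: 4 list. set a \<subseteq> {0, 2} \<and> length a = k1} \<times> {replicate k2 (0::2)}"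
  proof
    fix p assume "p \<in> f ` D"
    then obtain d where d: "d \<in> D" "p = f d" by blast
    have dC: "d \<in> C" using d DC by auto
    have A: "\<forall>j<k1. 2 * fst (f d) ! j = 0"
    proof (intro allI impI)
      fix j assume j: "j < k1"
      have "\<forall>x\<in>C. \<forall>y\<in>C. 2 * fst (f (vadd x y)) ! j = 2 * fst (f x) ! j + 2 * fst (f y) ! j"
        using fadd fE j by (simp add: distrib_left)
      moreover have "\<forall>c\<in>C. 2 * fst (f c) ! j + 2 * fst (f c) ! j = 0" using two4 by simp
      ultimately show "2 * fst (f d) ! j = 0" using vanish[of "\<lambda>c. 2 * fst (f c) ! j"] d by blast
    qed
    have Bq: "\<forall>j<k2. snd (f d) ! j = 0"
    proof (intro allI impI)
      fix j assume j: "j < k2"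
      have "\<forall>x\<in>C. \<forall>y\<in>C. emb (snd (f (vadd x y)) ! j) = emb (snd (f x) ! j) + emb (snd (f y) ! j)"
        using fadd fE j by (simp add: emb_add)
      moreover have "\<forall>c\<in>C. emb (snd (f c) ! j) + emb (snd (f c) ! j) = 0" using emb_2 by simp
      ultimately have "emb (snd (f d) ! j) = 0" using vanish[of "\<lambda>c. emb (snd (f c) ! j)"] d by blast
      then show "snd (f d) ! j = 0" by (simp add: emb_0)
    qed
    have "set (fst (f d)) \<subseteq> {0, 2}"
    proof
      fix x assume "x \<in> set (fst (f d))"
      then obtain j where "j < length (fst (f d))" "x = fst (f d) ! j" by (auto simp: in_set_conv_nth)
      then show "x \<in> {0, 2}" using A fE[OF dC] two4z by auto
    qed
    moreover have "snd (f d) = replicate k2 0"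
      by (rule nth_equalityI) (use fE[OF dC] Bq in auto)
    ultimately show "p \<in> {a :: 4 list. set a \<subseteq> {0, 2} \<and> length a = k1} \<times> {replicate k2 (0::2)}"
      using d fE[OF dC] by (cases "f d") auto
  qed
  have injD: "inj_on f D" using bij DC by (meson bij_betw_def inj_on_subset)
  have "card D \<le> 2 ^ k1"
  proof -
    have "card D = card (f ` D)" using card_image[OF injD] by simp
    also have "\<dots> \<le> 2 ^ k1" using card_mono[OF fin_S2 fD] card_S2 by simp
    finally show ?thesis .
  qed
  then have tk1: "t \<le> k1" using cardD by simp
  have injG: "inj_on Gray C" by (meson Gray_inj inj_onI)
  have GC: "\<forall>y\<in>Gray ` C. length y = 2 * n" using lenC by (auto simp: len_Gray)
  have n2: "2 * n = 2 ^ l - 2 ^ (l - t)"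
  proof -
    have "2 * n = 2 * 2 ^ (l - 1) - 2 * 2 ^ (l - 1 - t)" using nv2 by simp
    moreover have "2 * 2 ^ (l - 1 - t) = (2::nat) ^ (l - t)"
    proof -
      have "Suc (l - 1 - t) = l - t" using t(1) l1 by arith
      then show ?thesis by (metis power_Suc)
    qed
    ultimately show ?thesis using pl by simp
  qed
  have cardG: "card (Gray ` C) = 2 ^ l" using card_image[OF injG] cardC by simp
  have Gz: "Gray z = replicate (2 * n) 0" by (simp add: z_def Gray_zero)
  have wset: "{ham_wt y | y. y \<in> Gray ` C \<and> y \<noteq> replicate (2 * n) 0} = lee_weights C"
    unfolding Wdef
  proof (intro set_eqI iffI)
    fix v assume "v \<in> {ham_wt y | y. y \<in> Gray ` C \<and> y \<noteq> replicate (2 * n) 0}"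
    then obtain x where "x \<in> C" "Gray x \<noteq> Gray z" "v = ham_wt (Gray x)" using Gz by auto
    then show "v \<in> {lee_wt x | x. x \<in> C \<and> x \<noteq> z}" by (auto simp: ham_Gray)
  next
    fix v assume "v \<in> {lee_wt x | x. x \<in> C \<and> x \<noteq> z}"
    then obtain x where x: "x \<in> C" "x \<noteq> z" "v = lee_wt x" by auto
    then have Gx: "Gray x \<noteq> replicate (2 * n) 0" using Gz Gray_inj by metis
    have G: "Gray x \<in> Gray ` C" using x(1) by simp
    show "v \<in> {ham_wt y | y. y \<in> Gray ` C \<and> y \<noteq> replicate (2 * n) 0}"
      unfolding mem_Collect_eq
      by (rule exI[of _ "Gray x"]) (use G Gx x(3) ham_Gray[of x] in simp)
  qed
  have cimg: "\<And>v. card {y \<in> Gray ` C. ham_wt y = v} = card {x \<in> C. lee_wt x = v}"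
  proof -
    fix v
    have "{y \<in> Gray ` C. ham_wt y = v} = Gray ` {x \<in> C. lee_wt x = v}" by (auto simp: ham_Gray)
    moreover have "inj_on Gray {x \<in> C. lee_wt x = v}" using injG by (rule inj_on_subset) auto
    ultimately show "card {y \<in> Gray ` C. ham_wt y = v} = card {x \<in> C. lee_wt x = v}"
      by (simp add: card_image)
  qed
  have cn: "card {x \<in> C. lee_wt x = n} = 2 ^ l - 2 ^ t"
  proof -
    have "C = {x \<in> C. lee_wt x = n} \<union> D"
      using wts zC BC by (auto simp: D_def B_def)
    moreover have "{x \<in> C. lee_wt x = n} \<inter> D = {}"
      using lz npos w2n by (auto simp: D_def B_def)
    ultimately have "card C = card {x \<in> C. lee_wt x = n} + card D"
      using fin by (metis card_Un_disjoint finite_Un)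
    then show ?thesis using cardC cardD by simp
  qed
  have cw: "card {x \<in> C. lee_wt x = w2} = 2 ^ t - 1" using t(2) by (simp add: B_def[symmetric])
  have e1: "2 ^ (l - 1) - 2 ^ (l - t - 1) = n" using nv2 by (simp add: diff_commute)
  show ?thesis
    unfolding l_def[symmetric]
    apply (rule exI[of _ t])
    using t1 tk1 GC n2 cardG wset w12 w1n w2v e1 cimg cn cw by simp
qed

end
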